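(* Let $p$ be a prime and $(r,e,d)\in\mathscr{B}_0(p)$ with $p\mid r$. Then $r=p$, $e=p-1$, $d=p-1$, and $\det M_d(f(x)^e)=\varepsilon\,\delta(x_1,\ldots,x_r)^{2e-(p-1)}$ with $\varepsilon=1$ if $p\equiv1,2\pmod 4$ and $\varepsilon=-1$ if $p\equiv3\pmod4$.
   Context: Let $p$ be a prime. $\mathscr{B}_0(p)$ is the set of integer triples $(r,e,d)$ with $2\le r\le p+1$, $(p-1)/2<e\le p-1$, $r(p-1-e)\le p-1$, $d=r-1$. Let $x_1,\ldots,x_r$ be independent indeterminates over $\mathbb{F}_p$, $f(x)=(x-x_1)\cdots(x-x_r)$, write $f(x)^e=\sum_{i\ge0}c_ix^i$ ($c_i=0$ for $i<0$), and let $M_d(f(x)^e)$ be the $d\times d$ matrix with $(i,j)$ entry $c_{ip+j-d-1}$. Put $\delta(x_1,\ldots,x_r)=\prod_{1\le i<j\le r}(x_i-x_j)$. *)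

theory Defs
  imports "Berlekamp_Zassenhaus.Finite_Field" "Jordan_Normal_Form.Determinant"
    "HOL-Library.Poly_Mapping" "HOL-Computational_Algebra.Polynomial"
begin

text \<open>Multivariate polynomial ring F_p[x_1, x_2, ...]: finitely supported maps
  from monomials (exponent vectors nat \<Rightarrow>0 nat) to coefficients in F_p = 'p mod_ring,
  with p = CARD('p) prime.\<close>
type_synonym 'p mpoly = "(nat \<Rightarrow>\<^sub>0 nat) \<Rightarrow>\<^sub>0 'p mod_ring"

definition Xv :: "nat \<Rightarrow> 'p::prime_card mpoly" where
  "Xv i = Poly_Mapping.single (Poly_Mapping.single i 1) 1"

definition fpoly :: "nat \<Rightarrow> 'p::prime_card mpoly poly" where
  "fpoly r = (\<Prod>i\<in>{1..r}. [: - Xv i, 1 :])"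

definition coef_int :: "'a::zero poly \<Rightarrow> int \<Rightarrow> 'a" where
  "coef_int q k = (if k < 0 then 0 else coeff q (nat k))"

text \<open>M_d(g): d x d matrix with (i,j) entry c_{ip+j-d-1}, i,j = 1..d
  (Jordan_Normal_Form matrices are 0-indexed, so entry (i,j) here is the paper's (i+1,j+1)).\<close>
definition Md :: "nat \<Rightarrow> nat \<Rightarrow> 'a::zero poly \<Rightarrow> 'a mat" where
  "Md p d g = mat d d (\<lambda>(i, j). coef_int g (int (i + 1) * int p + int (j + 1) - int d - 1))"

definition delta :: "nat \<Rightarrow> 'p::prime_card mpoly" where
  "delta r = (\<Prod>i\<in>{1..r}. \<Prod>j\<in>{i<..r}. (Xv i - Xv j))"

text \<open>The set B_0(p); (p-1)/2 < e is written as p - 1 < 2e.\<close>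
definition B0 :: "nat \<Rightarrow> (nat \<times> nat \<times> nat) set" where
  "B0 p = {(r, e, d). 2 \<le> r \<and> r \<le> p + 1 \<and> p - 1 < 2 * e \<and> e \<le> p - 1
                     \<and> r * (p - 1 - e) \<le> p - 1 \<and> d = r - 1}"

end

theory Submission
  imports Defs
begin

lemma mat_mult_mat:
  "mat n k f * mat k m g = mat n m (\<lambda>(i,j). \<Sum>l<k. f (i,l) * g (l,j))"
  by (rule eq_matI) (auto simp: scalar_prod_def lessThan_atLeast0 intro!: sum.cong)

lemma lin_prod_degree_coeff:
  fixes y :: "nat \<Rightarrow> 'a::idom"
  assumes "finite S"
  shows "degree (\<Prod>m\<in>S. [:-y m, 1:]) = card S \<and> coeff (\<Prod>m\<in>S. [:-y m, 1:]) (card S) = 1"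
  using assms
proof (induction S rule: finite_induct)
  case empty
  then show ?case by simp
next
  case (insert a S)
  have nz: "(\<Prod>m\<in>S. [:-y m, 1:]) \<noteq> 0" using insert by (metis one_neq_zero leading_coeff_0_iff)
  have "degree (\<Prod>m\<in>insert a S. [:-y m, 1:]) = degree ([:-y a, 1:] * (\<Prod>m\<in>S. [:-y m, 1:]))"
    using insert by simp
  also have "\<dots> = 1 + card S" using nz insert by (subst degree_mult_eq) auto
  finally have d: "degree (\<Prod>m\<in>insert a S. [:-y m, 1:]) = card (insert a S)" using insert by simp
  have "lead_coeff (\<Prod>m\<in>insert a S. [:-y m, 1:]) = lead_coeff [:-y a, 1:] * lead_coeff (\<Prod>m\<in>S. [:-y m, 1:])"
  proof -
    have eq: "(\<Prod>m\<in>insert a S. [:-y m, 1:]) = [:-y a, 1:] * (\<Prod>m\<in>S. [:-y m, 1:])"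
      using insert(1,2) by (rule prod.insert)
    show ?thesis unfolding eq by (rule lead_coeff_mult)
  qed
  then have "lead_coeff (\<Prod>m\<in>insert a S. [:-y m, 1:]) = 1" using insert by simp
  then show ?case using d by simp
qed

lemma eval_mat:
  fixes x :: "nat \<Rightarrow> 'a::comm_ring_1" and Q :: "nat \<Rightarrow> 'a poly"
  assumes "\<And>j. j < n \<Longrightarrow> degree (Q j) < n"
  shows "mat n n (\<lambda>(i,k). x i ^ k) * mat n n (\<lambda>(k,j). coeff (Q j) k)
       = mat n n (\<lambda>(i,j). poly (Q j) (x i))"
  unfolding mat_mult_mat
proof (rule eq_matI, simp_all)
  fix i j assume "i < n" "j < n"
  have "poly (Q j) (x i) = (\<Sum>k\<le>degree (Q j). coeff (Q j) k * x i ^ k)" by (rule poly_altdef)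
  also have "\<dots> = (\<Sum>k<n. coeff (Q j) k * x i ^ k)"
    using assms[OF \<open>j<n\<close>]
    by (intro sum.mono_neutral_left) (auto simp: coeff_eq_0)
  finally show "(\<Sum>l<n. x i ^ l * coeff (Q j) l) = poly (Q j) (x i)" by (simp add: mult.commute)
qed

lemma eval_mat_rev:
  fixes x :: "nat \<Rightarrow> 'a::comm_ring_1" and Q :: "nat \<Rightarrow> 'a poly"
  assumes "\<And>j. j < n \<Longrightarrow> degree (Q j) < n"
  shows "mat n n (\<lambda>(i,k). x i ^ (n - 1 - k)) * mat n n (\<lambda>(k,j). coeff (Q j) (n - 1 - k))
       = mat n n (\<lambda>(i,j). poly (Q j) (x i))"
proof -
  have "mat n n (\<lambda>(i,k). x i ^ (n - 1 - k)) * mat n n (\<lambda>(k,j). coeff (Q j) (n - 1 - k))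
     = mat n n (\<lambda>(i,k). x i ^ k) * mat n n (\<lambda>(k,j). coeff (Q j) k)"
    unfolding mat_mult_mat
  proof (rule eq_matI, simp_all)
    fix i j
    show "(\<Sum>l<n. x i ^ (n - Suc l) * coeff (Q j) (n - Suc l)) = (\<Sum>l<n. x i ^ l * coeff (Q j) l)"
      by (rule sum.nat_diff_reindex)
  qed
  then show ?thesis using eval_mat[OF assms] by simp
qed

lemma det_vand:
  fixes x :: "nat \<Rightarrow> 'a::idom"
  shows "det (mat n n (\<lambda>(i,k). x i ^ k)) = (\<Prod>i<n. \<Prod>m<i. (x i - x m))"
proof -
  define N where "N j = (\<Prod>m<j. [:-x m, 1:])" for j
  have dN: "degree (N j) = j" and cN: "coeff (N j) j = 1" for j
    using lin_prod_degree_coeff[of "{..<j}" x] by (auto simp: N_def)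
  have e: "mat n n (\<lambda>(i,k). x i ^ k) * mat n n (\<lambda>(k,j). coeff (N j) k)
     = mat n n (\<lambda>(i,j). poly (N j) (x i))"
    by (rule eval_mat) (simp add: dN)
  have dC: "det (mat n n (\<lambda>(k,j). coeff (N j) k)) = 1"
  proof -
    have "det (mat n n (\<lambda>(k,j). coeff (N j) k)) = prod_list (diag_mat (mat n n (\<lambda>(k,j). coeff (N j) k)))"
      by (rule det_upper_triangular) (auto simp: upper_triangular_def coeff_eq_0 dN)
    also have "\<dots> = 1" by (simp add: prod_list_diag_prod cN)
    finally show ?thesis .
  qed
  have dP: "det (mat n n (\<lambda>(i,j). poly (N j) (x i))) = (\<Prod>i<n. \<Prod>m<i. (x i - x m))"
  proof -
    have "det (mat n n (\<lambda>(i,j). poly (N j) (x i))) = prod_list (diag_mat (mat n n (\<lambda>(i,j). poly (N j) (x i))))"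
      by (rule det_lower_triangular[where n=n]) (auto simp: N_def poly_prod)
    also have "\<dots> = (\<Prod>i<n. \<Prod>m<i. (x i - x m))"
      by (simp add: prod_list_diag_prod N_def poly_prod atLeast0LessThan)
    finally show ?thesis .
  qed
  have "det (mat n n (\<lambda>(i,j). poly (N j) (x i))) = det (mat n n (\<lambda>(i,k). x i ^ k)) * det (mat n n (\<lambda>(k,j). coeff (N j) k))"
    unfolding e[symmetric] by (rule det_mult) auto
  then show ?thesis using dC dP by simp
qed

lemma det_vand_rev:
  fixes x :: "nat \<Rightarrow> 'a::idom"
  shows "det (mat n n (\<lambda>(i,k). x i ^ (n - 1 - k))) = (\<Prod>i<n. \<Prod>m\<in>{i<..<n}. (x i - x m))"
proof -
  define N where "N j = (\<Prod>m\<in>{j<..<n}. [:-x m, 1:])" for j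
  have dN: "degree (N j) = n - Suc j" and cN: "coeff (N j) (n - Suc j) = 1" for j
    using lin_prod_degree_coeff[of "{j<..<n}" x] by (auto simp: N_def)
  have e: "mat n n (\<lambda>(i,k). x i ^ (n - 1 - k)) * mat n n (\<lambda>(k,j). coeff (N j) (n - 1 - k))
     = mat n n (\<lambda>(i,j). poly (N j) (x i))"
    by (rule eval_mat_rev) (simp add: dN)
  have dC: "det (mat n n (\<lambda>(k,j). coeff (N j) (n - 1 - k))) = 1"
  proof -
    have "det (mat n n (\<lambda>(k,j). coeff (N j) (n - 1 - k))) = prod_list (diag_mat (mat n n (\<lambda>(k,j). coeff (N j) (n - 1 - k))))"
      by (rule det_lower_triangular[where n=n]) (auto simp: coeff_eq_0 dN)
    also have "\<dots> = 1" by (simp add: prod_list_diag_prod cN)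
    finally show ?thesis .
  qed
  have dP: "det (mat n n (\<lambda>(i,j). poly (N j) (x i))) = (\<Prod>i<n. \<Prod>m\<in>{i<..<n}. (x i - x m))"
  proof -
    have "det (mat n n (\<lambda>(i,j). poly (N j) (x i))) = prod_list (diag_mat (mat n n (\<lambda>(i,j). poly (N j) (x i))))"
      by (rule det_upper_triangular) (auto simp: upper_triangular_def N_def poly_prod)
    also have "\<dots> = (\<Prod>i<n. \<Prod>m\<in>{i<..<n}. (x i - x m))"
      by (simp add: prod_list_diag_prod N_def poly_prod atLeast0LessThan)
    finally show ?thesis .
  qed
  have "det (mat n n (\<lambda>(i,j). poly (N j) (x i))) = det (mat n n (\<lambda>(i,k). x i ^ (n - 1 - k))) * det (mat n n (\<lambda>(k,j). coeff (N j) (n - 1 - k)))"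
    unfolding e[symmetric] by (rule det_mult) auto
  then show ?thesis using dC dP by simp
qed

lemma det_B:
  fixes x :: "nat \<Rightarrow> 'a::idom"
  assumes inj: "\<And>i j. i<n \<Longrightarrow> j<n \<Longrightarrow> i\<noteq>j \<Longrightarrow> x i \<noteq> x j"
  defines "F \<equiv> \<lambda>j. \<Prod>m\<in>{..<n}-{j}. [:-x m,1:]"
  shows "det (mat n n (\<lambda>(k,j). coeff (F j) k)) = (\<Prod>i<n. \<Prod>m\<in>{i<..<n}. (x i - x m))"
    and "det (mat n n (\<lambda>(k,j). coeff (F j) (n-1-k))) = (\<Prod>i<n. \<Prod>m<i. (x i - x m))"
proof -
  define D where "D = (\<Prod>i<n. \<Prod>m\<in>{i<..<n}. (x i - x m))"
  define D' where "D' = (\<Prod>i<n. \<Prod>m<i. (x i - x m))"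
  have Dnz: "D \<noteq> 0" unfolding D_def using inj by (auto simp: prod_zero_iff)
  have D'nz: "D' \<noteq> 0" unfolding D'_def using inj by (auto simp: prod_zero_iff)
  have dF: "degree (F j) < n" if "j < n" for j
  proof -
    have "degree (F j) = card ({..<n}-{j})" unfolding F_def using lin_prod_degree_coeff[of "{..<n}-{j}" x] by simp
    then show ?thesis using that by simp
  qed
  have split: "(\<Prod>m\<in>{..<n}-{i}. (x i - x m)) = (\<Prod>m<i. (x i - x m)) * (\<Prod>m\<in>{i<..<n}. (x i - x m))"
    if "i < n" for i
  proof -
    have "{..<n}-{i} = {..<i} \<union> {i<..<n}" using that by auto
    moreover have "{..<i} \<inter> {i<..<n} = {}" by auto
    ultimately show ?thesis by (simp add: prod.union_disjoint)
  qed
  have dP: "det (mat n n (\<lambda>(i,j). poly (F j) (x i))) = D' * D"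
  proof -
    have "det (mat n n (\<lambda>(i,j). poly (F j) (x i))) = prod_list (diag_mat (mat n n (\<lambda>(i,j). poly (F j) (x i))))"
      by (rule det_upper_triangular) (auto simp: upper_triangular_def F_def poly_prod prod_zero_iff)
    also have "\<dots> = (\<Prod>i<n. (\<Prod>m<i. (x i - x m)) * (\<Prod>m\<in>{i<..<n}. (x i - x m)))"
      by (simp add: prod_list_diag_prod F_def poly_prod atLeast0LessThan split)
    also have "\<dots> = D' * D" by (simp add: D_def D'_def prod.distrib)
    finally show ?thesis .
  qed
  have "det (mat n n (\<lambda>(i,j). poly (F j) (x i))) = det (mat n n (\<lambda>(i,k). x i ^ k)) * det (mat n n (\<lambda>(k,j). coeff (F j) k))"
  proof -
    have e: "mat n n (\<lambda>(i,k). x i ^ k) * mat n n (\<lambda>(k,j). coeff (F j) k)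
     = mat n n (\<lambda>(i,j). poly (F j) (x i))"
      by (rule eval_mat) (rule dF)
    show ?thesis unfolding e[symmetric] by (rule det_mult) auto
  qed
  moreover have "det (mat n n (\<lambda>(i,k). x i ^ k)) = D'" unfolding D'_def by (rule det_vand)
  ultimately have "D' * det (mat n n (\<lambda>(k,j). coeff (F j) k)) = D' * D" using dP by metis
  then show "det (mat n n (\<lambda>(k,j). coeff (F j) k)) = D" using D'nz mult_left_cancel by blast
  have "det (mat n n (\<lambda>(i,j). poly (F j) (x i))) = det (mat n n (\<lambda>(i,k). x i ^ (n - 1 - k))) * det (mat n n (\<lambda>(k,j). coeff (F j) (n - 1 - k)))"
  proof -
    have e: "mat n n (\<lambda>(i,k). x i ^ (n - 1 - k)) * mat n n (\<lambda>(k,j). coeff (F j) (n - 1 - k))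
     = mat n n (\<lambda>(i,j). poly (F j) (x i))"
      by (rule eval_mat_rev) (rule dF)
    show ?thesis unfolding e[symmetric] by (rule det_mult) auto
  qed
  moreover have "det (mat n n (\<lambda>(i,k). x i ^ (n - 1 - k))) = D" unfolding D_def by (rule det_vand_rev)
  ultimately have "D * det (mat n n (\<lambda>(k,j). coeff (F j) (n - 1 - k))) = D * D'" using dP by (metis mult.commute)
  then show "det (mat n n (\<lambda>(k,j). coeff (F j) (n - 1 - k))) = D'" using Dnz mult_left_cancel by blast
qed

lemma frob_poly:
  fixes q :: "'a::comm_ring_1 poly"
  assumes "prime CHAR('a)"
  shows "q ^ CHAR('a) = (\<Sum>i\<le>degree q. monom (coeff q i ^ CHAR('a)) (i * CHAR('a)))"
proof -
  have "q ^ CHAR('a) = (\<Sum>i\<le>degree q. monom (coeff q i) i) ^ CHAR('a)"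
    by (simp add: poly_as_sum_of_monoms)
  also have "\<dots> = (\<Sum>i\<le>degree q. monom (coeff q i) i ^ CHAR('a))"
    by (rule freshmans_dream_sum) (simp_all add: assms semiring_char_poly)
  also have "\<dots> = (\<Sum>i\<le>degree q. monom (coeff q i ^ CHAR('a)) (i * CHAR('a)))"
    by (simp add: monom_power)
  finally show ?thesis .
qed

lemma frob_coeff:
  fixes q S :: "'a::comm_ring_1 poly"
  assumes pr: "prime CHAR('a)" and dS: "degree S = CHAR('a) - 1" and cS: "coeff S (CHAR('a) - 1) = 1"
  shows "coeff (q ^ CHAR('a) * S) (a * CHAR('a) + (CHAR('a) - 1)) = coeff q a ^ CHAR('a)"
proof -
  define p where "p = CHAR('a)"
  have p0: "p > 0" using pr prime_gt_0_nat p_def by blast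
  have T: "coeff (monom (coeff q i ^ p) (i * p) * S) (a * p + (p - 1)) = (if i = a then coeff q a ^ p else 0)" for i
  proof (cases "i = a")
    case True then show ?thesis using cS by (simp add: coeff_monom_mult p_def)
  next
    case False
    show ?thesis
    proof (cases "i < a")
      case True
      then have "i * p + p \<le> a * p" by (metis Suc_leI mult_Suc mult_le_mono1 add.commute)
      then have "a * p + (p - 1) - i * p > degree S" using dS p0 p_def by simp
      then show ?thesis using False by (simp add: coeff_monom_mult coeff_eq_0)
    next
      case False2: False
      then have "a * p + p \<le> i * p" using False by (metis Suc_leI linorder_neqE_nat mult_Suc mult_le_mono1 add.commute)
      then have "a * p + (p - 1) < i * p" using p0 by simp
      then show ?thesis using False by (simp add: coeff_monom_mult)
    qed
  qed
  have "coeff (q ^ p * S) (a * p + (p - 1)) = (\<Sum>i\<le>degree q. coeff (monom (coeff q i ^ p) (i * p) * S) (a * p + (p - 1)))"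
    unfolding p_def frob_poly[OF pr] by (simp add: sum_distrib_right coeff_sum)
  also have "\<dots> = (\<Sum>i\<le>degree q. (if i = a then coeff q a ^ p else 0))" by (intro sum.cong refl T)
  also have "\<dots> = coeff q a ^ p" using p0 by (auto simp: coeff_eq_0 power_0_left)
  finally show ?thesis unfolding p_def .
qed

lemma coeff_linear_power_top: "coeff ([:c, 1:] ^ k) k = (1::'a::idom)"
proof -
  have "lead_coeff ([:c, 1:] ^ k) = lead_coeff [:c, 1:] ^ k" by (rule lead_coeff_power)
  then have "lead_coeff ([:c, 1:] ^ k) = 1" by simp
  then show ?thesis by (simp add: degree_linear_power)
qed

lemma frob_mat:
  fixes x :: "nat \<Rightarrow> 'a::idom"
  assumes pr: "prime CHAR('a)"
  defines "p \<equiv> CHAR('a)"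
  defines "F \<equiv> \<lambda>j. \<Prod>m\<in>{..<p}-{j}. [:-x m,1:]"
  defines "g \<equiv> (\<Prod>m<p. [:-x m,1:]) ^ (p - 1)"
  shows "mat p p (\<lambda>(a,k). coeff g (a*p+k)) * mat p p (\<lambda>(k,j). coeff (F j) (p-1-k))
       = map_mat (\<lambda>z. z^p) (mat p p (\<lambda>(k,j). coeff (F j) k))"
  unfolding mat_mult_mat
proof (rule eq_matI, simp_all)
  fix a j assume a: "a < p" and j: "j < p"
  have p0: "p > 0" using pr prime_gt_0_nat p_def by blast
  have dF: "degree (F j) = p - 1"
  proof -
    have "degree (F j) = card ({..<p}-{j})" unfolding F_def using lin_prod_degree_coeff[of "{..<p}-{j}" x] by simp
    then show ?thesis using j by simp
  qed
  define n where "n = a * p + (p - 1)"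
  have "(\<Sum>l<p. coeff g (a*p+l) * coeff (F j) (p - Suc l)) = (\<Sum>l<p. coeff (F j) (p - Suc l) * coeff g (n - (p - Suc l)))"
    by (rule sum.cong) (auto simp: n_def)
  also have "\<dots> = (\<Sum>l<p. coeff (F j) l * coeff g (n - l))"
    by (rule sum.nat_diff_reindex)
  also have "\<dots> = (\<Sum>l\<le>n. coeff (F j) l * coeff g (n - l))"
    using dF p0 by (intro sum.mono_neutral_left) (auto simp: n_def coeff_eq_0)
  also have "\<dots> = coeff (F j * g) n" by (simp add: coeff_mult)
  also have "F j * g = F j ^ p * [:-x j, 1:] ^ (p - 1)"
  proof -
    have "(\<Prod>m<p. [:-x m,1:]) = [:-x j, 1:] * F j"
      unfolding F_def using j by (intro prod.remove) auto
    then have "g = [:-x j, 1:] ^ (p - 1) * F j ^ (p - 1)" unfolding g_def by (simp only: power_mult_distrib)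
    moreover have "F j * F j ^ (p - 1) = F j ^ p" using p0 by (metis Suc_diff_1 power_Suc)
    ultimately show ?thesis by (metis mult.assoc mult.commute)
  qed
  also have "coeff (F j ^ p * [:-x j, 1:] ^ (p - 1)) n = coeff (F j) a ^ p"
    unfolding n_def p_def
    by (rule frob_coeff[OF pr]) (simp_all only: degree_linear_power coeff_linear_power_top)
  finally show "(\<Sum>l<p. coeff g (a*p+l) * coeff (F j) (p - Suc l)) = coeff (F j) a ^ p" .
qed

lemma sign_D:
  fixes x :: "nat \<Rightarrow> 'a::comm_ring_1"
  shows "(\<Prod>i<n. \<Prod>m<i. (x i - x m)) = (-1)^(\<Sum>i<n. i) * (\<Prod>i<n. \<Prod>m\<in>{i<..<n}. (x i - x m))"
proof (induction n)
  case 0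
  then show ?case by simp
next
  case (Suc n)
  have e1: "(\<Prod>m<n. (x n - x m)) = (-1)^n * (\<Prod>m<n. (x m - x n))"
  proof -
    have "(\<Prod>m<n. (x n - x m)) = (\<Prod>m<n. (-1) * (x m - x n))" by (intro prod.cong) auto
    also have "\<dots> = (\<Prod>m<n. (-1::'a)) * (\<Prod>m<n. (x m - x n))" by (rule prod.distrib)
    also have "\<dots> = (-1)^n * (\<Prod>m<n. (x m - x n))" by simp
    finally show ?thesis .
  qed
  have e2: "(\<Prod>i<Suc n. \<Prod>m\<in>{i<..<Suc n}. (x i - x m)) = (\<Prod>i<n. \<Prod>m\<in>{i<..<n}. (x i - x m)) * (\<Prod>m<n. (x m - x n))"
  proof -
    have "{n<..<Suc n} = {}" by auto
    then have "(\<Prod>i<Suc n. \<Prod>m\<in>{i<..<Suc n}. (x i - x m)) = (\<Prod>i<n. \<Prod>m\<in>{i<..<Suc n}. (x i - x m))"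
      by simp
    also have "\<dots> = (\<Prod>i<n. (x i - x n) * (\<Prod>m\<in>{i<..<n}. (x i - x m)))"
    proof (intro prod.cong refl)
      fix i assume "i \<in> {..<n}"
      then have "{i<..<Suc n} = insert n {i<..<n}" by auto
      then show "(\<Prod>m\<in>{i<..<Suc n}. (x i - x m)) = (x i - x n) * (\<Prod>m\<in>{i<..<n}. (x i - x m))" by simp
    qed
    also have "\<dots> = (\<Prod>i<n. \<Prod>m\<in>{i<..<n}. (x i - x m)) * (\<Prod>m<n. (x m - x n))"
      by (simp add: prod.distrib mult.commute)
    finally show ?thesis .
  qed
  show ?case
    unfolding e2 by (simp add: Suc e1 power_add algebra_simps)
qed

lemma coef_int_nat: "coef_int g (int n) = coeff g n"
  by (simp add: coef_int_def)

lemma det_A_M: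
  fixes g :: "'a::comm_ring_1 poly"
  assumes p: "p > 0" and dg: "degree g = (p - 1) * p" and cg: "coeff g ((p - 1) * p) = 1"
  shows "det (mat p p (\<lambda>(a,k). coeff g (a*p+k))) = (-1)^(p-1) * det (Md p (p-1) g)"
proof -
  define A where "A = mat p p (\<lambda>(a,k). coeff g (a*p+k))"
  have Ac: "A \<in> carrier_mat p p" unfolding A_def by simp
  have row: "A $$ (p - Suc 0, j) = (if j = 0 then 1 else 0)" if "j < p" for j
    using that p cg dg unfolding A_def by (auto simp: coeff_eq_0)
  have "det A = (\<Sum>j<p. A $$ (p-1, j) * cofactor A (p-1) j)"
    using p by (intro laplace_expansion_row[OF Ac]) auto
  also have "\<dots> = (\<Sum>j<p. if j = 0 then cofactor A (p-1) 0 else 0)"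
    by (intro sum.cong refl) (auto simp: row)
  also have "\<dots> = cofactor A (p-1) 0" using p by simp
  also have "\<dots> = (-1)^(p-1) * det (mat_delete A (p-1) 0)" by (simp add: cofactor_def)
  also have "mat_delete A (p-1) 0 = Md p (p-1) g"
  proof (rule eq_matI)
    fix i j assume i: "i < dim_row (Md p (p-1) g)" and j: "j < dim_col (Md p (p-1) g)"
    then have i': "i < p - 1" and j': "j < p - 1" by (auto simp: Md_def)
    have e: "int (i + 1) * int p + int (j + 1) - int (p - 1) - 1 = int (i * p + j + 1)"
      using p by (simp add: of_nat_diff algebra_simps)
    have "Md p (p-1) g $$ (i, j) = coef_int g (int (i + 1) * int p + int (j + 1) - int (p - 1) - 1)"
      using i' j' unfolding Md_def by simp
    also have "\<dots> = coeff g (i * p + j + 1)" by (simp only: e coef_int_nat)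
    finally show "mat_delete A (p-1) 0 $$ (i, j) = Md p (p-1) g $$ (i, j)"
      using i' j' unfolding mat_delete_def A_def by simp
  qed (auto simp: Md_def A_def mat_delete_def)
  finally show ?thesis unfolding A_def .
qed

theorem general_det:
  fixes x :: "nat \<Rightarrow> 'a::idom"
  assumes pr: "prime CHAR('a)"
    and inj: "\<And>i j. i < CHAR('a) \<Longrightarrow> j < CHAR('a) \<Longrightarrow> i \<noteq> j \<Longrightarrow> x i \<noteq> x j"
  defines "p \<equiv> CHAR('a)"
  shows "det (Md p (p-1) ((\<Prod>m<p. [:-x m,1:])^(p-1)))
       = (-1)^(p-1) * (-1)^(\<Sum>i<p. i) * (\<Prod>i<p. \<Prod>m\<in>{i<..<p}. (x i - x m))^(p-1)"
proof -
  define F where "F = (\<lambda>j. \<Prod>m\<in>{..<p}-{j}. [:-x m,1:])"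
  define f where "f = (\<Prod>m<p. [:-x m,1:])"
  define g where "g = f ^ (p - 1)"
  define D where "D = (\<Prod>i<p. \<Prod>m\<in>{i<..<p}. (x i - x m))"
  define D' where "D' = (\<Prod>i<p. \<Prod>m<i. (x i - x m))"
  define \<sigma> where "\<sigma> = ((-1::'a)^(\<Sum>i<p. i))"
  have p0: "p > 0" using pr prime_gt_0_nat p_def by blast
  have inj': "\<And>i j. i < p \<Longrightarrow> j < p \<Longrightarrow> i \<noteq> j \<Longrightarrow> x i \<noteq> x j" using inj p_def by blast
  have Dnz: "D \<noteq> 0" unfolding D_def using inj' by (auto simp: prod_zero_iff)
  have hom: "comm_ring_hom (\<lambda>z::'a. z ^ p)"
    by unfold_locales (use p0 in \<open>simp_all add: power_mult_distrib freshmans_dream pr p_def\<close>)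
  have dB: "det (mat p p (\<lambda>(k,j). coeff (F j) k)) = D"
    unfolding F_def D_def by (rule det_B(1)) (rule inj')
  have dB': "det (mat p p (\<lambda>(k,j). coeff (F j) (p-1-k))) = D'"
    unfolding F_def D'_def by (rule det_B(2)) (rule inj')
  have D'D: "D' = \<sigma> * D" unfolding D'_def D_def \<sigma>_def by (rule sign_D)
  have "det (mat p p (\<lambda>(a,k). coeff g (a*p+k)) * mat p p (\<lambda>(k,j). coeff (F j) (p-1-k)))
      = det (map_mat (\<lambda>z. z^p) (mat p p (\<lambda>(k,j). coeff (F j) k)))"
    unfolding g_def f_def F_def p_def by (subst frob_mat[OF pr]) simp
  also have "\<dots> = D ^ p" using comm_ring_hom.hom_det[OF hom] dB by simp
  finally have "det (mat p p (\<lambda>(a,k). coeff g (a*p+k))) * D' = D ^ p"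
    using dB' by (subst (asm) det_mult[where n=p]) auto
  moreover have "D ^ p = D ^ (p - 1) * D" using p0 by (metis Suc_diff_1 power_Suc2)
  ultimately have "(det (mat p p (\<lambda>(a,k). coeff g (a*p+k))) * \<sigma>) * D = D ^ (p - 1) * D"
    unfolding D'D by (simp add: mult.assoc)
  then have h: "det (mat p p (\<lambda>(a,k). coeff g (a*p+k))) * \<sigma> = D ^ (p - 1)" using Dnz by simp
  have ss: "\<sigma> * \<sigma> = 1" unfolding \<sigma>_def by (simp flip: power_mult_distrib)
  have eA: "det (mat p p (\<lambda>(a,k). coeff g (a*p+k))) = \<sigma> * D ^ (p - 1)"
  proof -
    have "det (mat p p (\<lambda>(a,k). coeff g (a*p+k))) = det (mat p p (\<lambda>(a,k). coeff g (a*p+k))) * (\<sigma> * \<sigma>)"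
      using ss by simp
    also have "\<dots> = (det (mat p p (\<lambda>(a,k). coeff g (a*p+k))) * \<sigma>) * \<sigma>" by (simp only: mult.assoc)
    also have "\<dots> = \<sigma> * D ^ (p - 1)" using h by (simp add: mult.commute)
    finally show ?thesis .
  qed
  have df: "degree f = p" and cf: "coeff f p = 1"
    using lin_prod_degree_coeff[of "{..<p}" x] by (auto simp: f_def)
  have f0: "f \<noteq> 0" using cf by auto
  have dg: "degree g = (p - 1) * p" unfolding g_def using f0 df by (simp add: degree_power_eq)
  have cg: "coeff g ((p - 1) * p) = 1"
  proof -
    have "lead_coeff g = lead_coeff f ^ (p - 1)" unfolding g_def by (rule lead_coeff_power)
    then show ?thesis using dg df cf by simp
  qed
  have "det (mat p p (\<lambda>(a,k). coeff g (a*p+k))) = (-1)^(p-1) * det (Md p (p-1) g)"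
    by (rule det_A_M[OF p0 dg cg])
  then have h2: "(-1)^(p-1) * det (Md p (p-1) g) = \<sigma> * D ^ (p - 1)" using eA by simp
  have tt: "(-1::'a)^(p-1) * (-1)^(p-1) = 1" by (simp flip: power_mult_distrib)
  have "det (Md p (p-1) g) = ((-1)^(p-1) * (-1)^(p-1)) * det (Md p (p-1) g)" using tt by simp
  also have "\<dots> = (-1)^(p-1) * ((-1)^(p-1) * det (Md p (p-1) g))" by (simp only: mult.assoc)
  also have "\<dots> = (-1)^(p-1) * (\<sigma> * D ^ (p - 1))" using h2 by simp
  finally have "det (Md p (p-1) g) = (-1)^(p-1) * (\<sigma> * D ^ (p - 1))" .
  then show ?thesis unfolding g_def f_def D_def \<sigma>_def by (simp add: mult.assoc)
qed

lemma CHAR_mpoly: "CHAR('p::prime_card mpoly) = CARD('p)"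
proof (rule CHAR_eqI)
  have "(of_nat CARD('p) :: 'p mod_ring) = 0" by (metis of_nat_CHAR semiring_char_mod_ring)
  then show "(of_nat CARD('p) :: 'p mpoly) = 0" by (metis single_of_nat single_zero)
next
  fix n assume "(of_nat n :: 'p mpoly) = 0"
  then have "Poly_Mapping.lookup (of_nat n :: 'p mpoly) 0 = 0" by (simp add: lookup_zero)
  then have "(of_nat n :: 'p mod_ring) = 0" by (simp add: lookup_of_nat)
  then show "CARD('p) dvd n" by (simp add: of_nat_eq_0_iff_char_dvd semiring_char_mod_ring)
qed

lemma Xv_inj: "a \<noteq> b \<Longrightarrow> (Xv a :: 'p::prime_card mpoly) \<noteq> Xv b"
proof
  assume ne: "a \<noteq> b" and eq: "(Xv a :: 'p mpoly) = Xv b"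
  have "Poly_Mapping.lookup (Xv a :: 'p mpoly) (Poly_Mapping.single a 1) = 1" by (simp add: Xv_def)
  moreover have "Poly_Mapping.lookup (Xv b :: 'p mpoly) (Poly_Mapping.single a 1) = 0"
  proof -
    have "Poly_Mapping.single b (1::nat) \<noteq> Poly_Mapping.single a 1"
    proof
      assume "Poly_Mapping.single b (1::nat) = Poly_Mapping.single a 1"
      then have "Poly_Mapping.lookup (Poly_Mapping.single b (1::nat)) a = Poly_Mapping.lookup (Poly_Mapping.single a 1) a" by simp
      then show False using ne by (simp add: lookup_single when_def)
    qed
    then show ?thesis by (simp add: Xv_def lookup_single)
  qed
  ultimately show False using eq by simp
qed

lemma sum_parity: "even (\<Sum>i<(n::nat). i) \<longleftrightarrow> (n mod 4 = 0 \<or> n mod 4 = 1)"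
proof (induction n)
  case 0 then show ?case by simp
next
  case (Suc n)
  have "(\<Sum>i<Suc n. i) = (\<Sum>i<n. i) + n" by simp
  then show ?case using Suc by presburger
qed

lemma sign_final:
  assumes "prime (p::nat)"
  shows "(-1::'a::comm_ring_1)^(p-1) * (-1)^(\<Sum>i<p. i) = (if p mod 4 = 3 then -1 else 1)"
proof -
  have p1: "p \<ge> 2" using assms prime_ge_2_nat by blast
  have "p mod 4 \<noteq> 0"
  proof
    assume "p mod 4 = 0"
    then have "2 dvd p" by presburger
    then have "2 = (1::nat) \<or> 2 = p" using assms unfolding prime_nat_iff by blast
    then have "p = 2" by simp
    then show False using \<open>p mod 4 = 0\<close> by simp
  qed
  have "(-1::'a)^(p-1) * (-1)^(\<Sum>i<p. i) = (-1)^(p - 1 + (\<Sum>i<p. i))" by (simp add: power_add)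
  also have "\<dots> = (if p mod 4 = 3 then -1 else 1)"
    using sum_parity[of p] \<open>p mod 4 \<noteq> 0\<close> p1 by (auto simp: minus_one_power_iff) presburger+
  finally show ?thesis .
qed

theorem proposition5:
  fixes r e d :: nat
  assumes "(r, e, d) \<in> B0 CARD('p::prime_card)"
    and "CARD('p) dvd r"
  shows "r = CARD('p) \<and> e = CARD('p) - 1 \<and> d = CARD('p) - 1 \<and>
    det (Md CARD('p) d ((fpoly r :: 'p mpoly poly) ^ e))
      = (if CARD('p) mod 4 = 3 then - 1 else 1) * delta r ^ (2 * e - (CARD('p) - 1))"
proof -
  define p where "p = CARD('p)"
  have pr: "prime p" unfolding p_def by (rule prime_card)
  have p2: "p \<ge> 2" using pr prime_ge_2_nat by blast
  from assms(1) have B: "2 \<le> r" "r \<le> p + 1" "p - 1 < 2 * e" "e \<le> p - 1" "r * (p - 1 - e) \<le> p - 1" "d = r - 1"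
    unfolding B0_def p_def by auto
  obtain k where k: "r = p * k" using assms(2) p_def by blast
  have "k = 1"
  proof -
    have "k \<noteq> 0" using k B(1) by (cases "k = 0") auto
    moreover have "k < 2" proof (rule ccontr)
      assume "\<not> k < 2" then have "p * 2 \<le> p * k" by simp
      then show False using k B(2) p2 by linarith
    qed
    ultimately show ?thesis by simp
  qed
  then have rp: "r = p" using k by simp
  have ep: "e = p - 1"
  proof (rule ccontr)
    assume "e \<noteq> p - 1" then have "p - 1 - e \<ge> 1" using B(4) by simp
    then have h1: "p * 1 \<le> p * (p - 1 - e)" by (intro mult_le_mono2)
    have h2: "p * (p - 1 - e) \<le> p - 1" using B(5) rp by simp
    from h1 h2 p2 show False by linarith
  qed
  have dp: "d = p - 1" using B(6) rp by simp
  define x where "x = (\<lambda>m. Xv (Suc m) :: 'p mpoly)"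
  have fp: "fpoly p = (\<Prod>m<p. [:- x m, 1:])"
    unfolding fpoly_def x_def by (simp add: prod.atLeast1_atMost_eq)
  have inner: "(\<Prod>j\<in>{Suc i<..p}. (Xv (Suc i) - Xv j :: 'p mpoly)) = (\<Prod>m\<in>{i<..<p}. (x i - x m))" for i
    unfolding x_def by (rule prod.reindex_bij_witness[of _ Suc "\<lambda>j. j - 1"]) auto
  have dl: "delta p = (\<Prod>i<p. \<Prod>m\<in>{i<..<p}. (x i - x m))"
    unfolding delta_def by (simp add: prod.atLeast1_atMost_eq inner)
  have cm: "CHAR('p mpoly) = p" unfolding p_def by (rule CHAR_mpoly)
  have prC: "prime CHAR('p mpoly)" using pr cm by simp
  have injx: "\<And>i j. i < CHAR('p mpoly) \<Longrightarrow> j < CHAR('p mpoly) \<Longrightarrow> i \<noteq> j \<Longrightarrow> x i \<noteq> x j"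
    unfolding x_def by (simp add: Xv_inj)
  have G: "det (Md p (p-1) ((\<Prod>m<p. [:-x m,1:])^(p-1)))
       = (-1)^(p-1) * (-1)^(\<Sum>i<p. i) * (\<Prod>i<p. \<Prod>m\<in>{i<..<p}. (x i - x m))^(p-1)"
    using general_det[OF prC injx] unfolding cm by simp
  have ee: "2 * e - (p - 1) = p - 1" using ep by simp
  have "det (Md p d ((fpoly r :: 'p mpoly poly) ^ e)) = (if p mod 4 = 3 then - 1 else 1) * delta r ^ (2 * e - (p - 1))"
    unfolding rp ep dp ee fp dl G sign_final[OF pr] by simp
  then show ?thesis using rp ep dp unfolding p_def by simp
qed

end
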